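(* Let $p$ be an odd prime and let $H\le\mathrm{S}_n$, $n=pk$, have orbits $\Omega_1,\dots,\Omega_k$ each of size $p$ such that each $D_i:=H|_{\Omega_i}$ is permutation isomorphic to the dihedral group $\mathrm{D}_{2p}$ of order $2p$ in its natural action of degree $p$. Let $D=D_1\times\dots\times D_k\le\mathrm{S}_n$, let $G_i$ be the Sylow $p$-subgroup of $D_i$, $G=G_1\times\dots\times G_k\le\mathrm{S}_n$, and for $q\in\{2,p\}$ let $H_q$ be a Sylow $q$-subgroup of $H$. Then: (1) $H=H_p\rtimes H_2=(H\cap G)\rtimes H_2$, and so $N_{\mathrm{S}_n}(H)\le N_{\mathrm{S}_n}(H_p)$; (2) $H_p$ is a subdirect product of $G$ (each projection $H_p\to G_i$ is surjective), and so $H_p$ has orbits $\Omega_1,\dots,\Omega_k$ with each $H_p|_{\Omega_i}$ cyclic of order $p$; (3) for every $i$ there exists $\alpha_i\in\Omega_i$ such that $H_2|_{\Omega_i}=(D_i)_{\alpha_i}$.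
   Context: Subgroups of $\mathrm{Sym}(\Omega_i)$ are regarded as subgroups of $\mathrm{S}_n$ supported on $\Omega_i$. $(D_i)_{\alpha_i}$ is the stabiliser of $\alpha_i$ in $D_i$. *)

theory Defs
  imports "HOL-Algebra.Sym_Groups" "HOL-Algebra.Group_Action" "HOL-Algebra.Elementary_Groups"
          "HOL-Computational_Algebra.Primes"
begin

definition restr_perm :: "nat set \<Rightarrow> (nat \<Rightarrow> nat) \<Rightarrow> (nat \<Rightarrow> nat)" where
  "restr_perm \<Omega> \<sigma> = (\<lambda>x. if x \<in> \<Omega> then \<sigma> x else x)"

definition restr_group :: "nat set \<Rightarrow> (nat \<Rightarrow> nat) set \<Rightarrow> (nat \<Rightarrow> nat) set" where
  "restr_group \<Omega> H = restr_perm \<Omega> ` H"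

text \<open>The dihedral group D_2p in its natural action of degree p, on {0..<p}:
  the maps x \<mapsto> a x + b (mod p) with a = 1 or a = -1.\<close>
definition dihedral_perms :: "nat \<Rightarrow> (nat \<Rightarrow> nat) set" where
  "dihedral_perms p =
     {(\<lambda>x. if x < p then (a * x + b) mod p else x) | a b. a \<in> {1, p - 1} \<and> b < p}"

definition transport_perm :: "(nat \<Rightarrow> nat) \<Rightarrow> nat set \<Rightarrow> (nat \<Rightarrow> nat) \<Rightarrow> (nat \<Rightarrow> nat)" where
  "transport_perm f \<Omega> \<sigma> = (\<lambda>y. if y \<in> f ` \<Omega> then f (\<sigma> (inv_into \<Omega> f y)) else y)"

definition perm_isomorphic :: "(nat \<Rightarrow> nat) set \<Rightarrow> nat set \<Rightarrow> (nat \<Rightarrow> nat) set \<Rightarrow> nat set \<Rightarrow> bool" where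
  "perm_isomorphic A \<Omega> B X \<longleftrightarrow> (\<exists>f. bij_betw f \<Omega> X \<and> transport_perm f \<Omega> ` A = B)"

definition is_sylow :: "('a, 'b) monoid_scheme \<Rightarrow> nat \<Rightarrow> 'a set \<Rightarrow> bool" where
  "is_sylow G q P \<longleftrightarrow> subgroup P G \<and> card P = q ^ multiplicity q (order G)"

definition direct_prod_perms :: "nat \<Rightarrow> nat \<Rightarrow> (nat \<Rightarrow> nat set) \<Rightarrow> (nat \<Rightarrow> (nat \<Rightarrow> nat) set) \<Rightarrow> (nat \<Rightarrow> nat) set" where
  "direct_prod_perms n k \<Omega> K =
     {\<sigma> \<in> carrier (sym_group n). \<forall>i \<in> {1..k}. restr_perm (\<Omega> i) \<sigma> \<in> K i}"

end

theory Submission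
  imports Defs "HOL-Algebra.Multiplicative_Group" "HOL-Algebra.Sylow"
begin

lemma (in group) exp_prime_dvd:
  assumes fin: "finite (carrier G)" and e: "\<forall>x\<in>carrier G. x [^] (e::nat) = \<one>"
    and q: "prime q" and qd: "q dvd order G"
  shows "q dvd e"
proof -
  obtain m where om: "order G = q ^ multiplicity q (order G) * m"
    using multiplicity_dvd by (metis dvd_def)
  obtain P where P: "subgroup P G" "card P = q ^ multiplicity q (order G)"
    using sylow_thm[OF q is_group om fin] by blast
  have opos: "order G > 0" using fin order_gt_0_iff_finite by blast
  have m1: "multiplicity q (order G) \<ge> 1"
  proof -
    have "prime_elem q" using prime_imp_prime_elem[OF q] .
    hence "multiplicity q (order G) > 0" using prime_multiplicity_gt_zero_iff[of q "order G"] qd opos by simp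
    thus ?thesis by simp
  qed
  have "card P \<ge> q" unfolding P(2)
    using power_increasing[OF m1, of q] prime_gt_0_nat[OF q] by simp
  hence "card P \<ge> 2" using prime_ge_2_nat[OF q] by linarith
  have "\<not> P \<subseteq> {\<one>}"
  proof
    assume "P \<subseteq> {\<one>}"
    hence "card P \<le> card {\<one>}" by (intro card_mono) auto
    thus False using \<open>card P \<ge> 2\<close> by simp
  qed
  then obtain x where x: "x \<in> P" "x \<noteq> \<one>" by auto
  have xc: "x \<in> carrier G" using x P(1) subgroup.subset by blast
  have gP: "group (G\<lparr>carrier := P\<rparr>)" using P(1) subgroup_imp_group by blast
  have "x [^]\<^bsub>G\<lparr>carrier := P\<rparr>\<^esub> order (G\<lparr>carrier := P\<rparr>) = \<one>\<^bsub>G\<lparr>carrier := P\<rparr>\<^esub>"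
    using group.pow_order_eq_1[OF gP] x by simp
  hence "x [^] card P = \<one>" unfolding order_def by (simp add: nat_pow_consistent[symmetric])
  hence d1: "ord x dvd q ^ multiplicity q (order G)" using pow_eq_id[OF xc] P(2) by simp
  have d2: "ord x dvd e" using pow_eq_id[OF xc] e xc by blast
  obtain i where i: "i \<le> multiplicity q (order G)" "ord x = q ^ i"
    using d1 divides_primepow_nat[OF q] by blast
  have "i \<noteq> 0"
  proof
    assume "i = 0"
    hence "ord x = 1" using i by simp
    thus False using ord_eq_1[OF xc] x(2) by simp
  qed
  hence "q dvd ord x" using i by (simp add: dvd_power)
  thus ?thesis using d2 dvd_trans by blast
qed


lemma (in group) coprime_pows_one:
  assumes "x \<in> carrier G" "x [^] (a::nat) = \<one>" "x [^] (b::nat) = \<one>" "coprime a b"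
  shows "x = \<one>"
proof -
  have "ord x dvd a" "ord x dvd b" using assms pow_eq_id by auto
  hence "ord x dvd gcd a b" by simp
  hence "ord x = 1" using assms(4) by simp
  thus ?thesis using ord_eq_1 assms(1) by blast
qed


lemma (in group) conj_pow:
  assumes "x \<in> carrier G" "h \<in> carrier G"
  shows "(x \<otimes> h \<otimes> inv x) [^] (n::nat) = x \<otimes> (h [^] n) \<otimes> inv x"
proof (induction n)
  case 0
  then show ?case using assms by simp
next
  case (Suc n)
  have "(x \<otimes> h \<otimes> inv x) [^] Suc n = (x \<otimes> (h [^] n) \<otimes> inv x) \<otimes> (x \<otimes> h \<otimes> inv x)"
    using Suc by simp
  also have "\<dots> = x \<otimes> (h [^] n \<otimes> h) \<otimes> inv x"
  proof -
    have "\<And>y. y \<in> carrier G \<Longrightarrow> inv x \<otimes> (x \<otimes> y) = y" by (simp add: m_assoc[symmetric] assms)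
    thus ?thesis using assms by (simp add: m_assoc)
  qed
  also have "\<dots> = x \<otimes> (h [^] Suc n) \<otimes> inv x" by simp
  finally show ?case .
qed


lemma card_set_mult_le:
  assumes "finite A" "finite B"
  shows "card (A <#>\<^bsub>G\<^esub> B) \<le> card A * card B"
proof -
  have "A <#>\<^bsub>G\<^esub> B = (\<lambda>(a,b). a \<otimes>\<^bsub>G\<^esub> b) ` (A \<times> B)"
    unfolding set_mult_def by auto
  hence "card (A <#>\<^bsub>G\<^esub> B) \<le> card (A \<times> B)"
    by (metis card_image_le assms finite_cartesian_product)
  thus ?thesis by (simp add: card_cartesian_product)
qed


lemma (in group) card_set_mult_trivial:
  assumes A: "subgroup A G" and B: "subgroup B G" and AB: "A \<inter> B = {\<one>}"
    and "finite A" "finite B"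
  shows "card (A <#> B) = card A * card B"
proof -
  have eq: "A <#> B = (\<lambda>(a,b). a \<otimes> b) ` (A \<times> B)"
    unfolding set_mult_def by auto
  have inj: "inj_on (\<lambda>(a,b). a \<otimes> b) (A \<times> B)"
  proof (rule inj_onI, clarify)
    fix a b a' b' assume h: "a \<in> A" "b \<in> B" "a' \<in> A" "b' \<in> B" "a \<otimes> b = a' \<otimes> b'"
    have c: "a \<in> carrier G" "b \<in> carrier G" "a' \<in> carrier G" "b' \<in> carrier G"
      using h A B subgroup.subset by blast+
    have "inv a' \<otimes> (a \<otimes> b) = b'" using c by (simp add: h(5) m_assoc[symmetric])
    hence "b' = inv a' \<otimes> a \<otimes> b" using c by (simp add: m_assoc)
    hence "inv a' \<otimes> a = b' \<otimes> inv b" using c by (simp add: inv_solve_right)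
    moreover have "inv a' \<otimes> a \<in> A" using A h by (simp add: subgroup.m_closed subgroup.m_inv_closed)
    moreover have "b' \<otimes> inv b \<in> B" using B h by (simp add: subgroup.m_closed subgroup.m_inv_closed)
    ultimately have "inv a' \<otimes> a = \<one>" using AB by auto
    moreover have "a = a' \<otimes> (inv a' \<otimes> a)" using c by (simp add: m_assoc[symmetric])
    ultimately have "a = a'" using c by simp
    moreover have "b = b'" using h(5) c \<open>a = a'\<close> by simp
    ultimately show "a = a' \<and> b = b'" by simp
  qed
  show ?thesis unfolding eq using card_image[OF inj] by (simp add: card_cartesian_product)
qed


lemma prime_factors_2p:
  fixes n p :: nat
  assumes "n > 0" "prime p" "p \<noteq> 2"
    and pf: "\<forall>q. prime q \<longrightarrow> q dvd n \<longrightarrow> q = 2 \<or> q = p"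
  shows "n = 2 ^ multiplicity 2 n * p ^ multiplicity p n"
proof -
  have sub: "prime_factors n \<subseteq> {2, p}" using pf assms(1)
    by (auto simp: in_prime_factors_iff)
  have "n = (\<Prod>q \<in> prime_factors n. q ^ multiplicity q n)"
    using prime_factorization_nat[OF assms(1)] .
  also have "\<dots> = (\<Prod>q \<in> {2,p}. q ^ multiplicity q n)"
  proof (rule prod.mono_neutral_left[OF _ sub])
    show "finite {2, p}" by simp
    show "\<forall>i\<in>{2, p} - prime_factors n. i ^ multiplicity i n = 1"
      using assms(1) by (auto simp: in_prime_factors_iff not_dvd_imp_multiplicity_0 assms(2))
  qed
  also have "\<dots> = 2 ^ multiplicity 2 n * p ^ multiplicity p n" using assms(3) by simp
  finally show ?thesis .
qed


lemma (in group) prime_order_cyclic: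
  assumes "prime (order G)"
  shows "cyclic_group G"
proof -
  have o2: "order G \<ge> 2" using assms prime_ge_2_nat by blast
  hence fin: "finite (carrier G)" unfolding order_def using card.infinite by fastforce
  have "carrier G \<noteq> {\<one>}" using o2 unfolding order_def by auto
  then obtain g where g: "g \<in> carrier G" "g \<noteq> \<one>" using one_closed by blast
  have "ord g dvd order G" using ord_dvd_group_order g by blast
  moreover have "ord g \<noteq> 1" using ord_eq_1 g by blast
  ultimately have "ord g = order G" using assms by (meson prime_nat_iff)
  hence c: "card (generate G (carrier G \<inter> {g})) = card (carrier G)"
    using cyclic_order_is_ord[OF g(1)] unfolding order_def subgroup_generated_def by simp
  have "generate G (carrier G \<inter> {g}) \<subseteq> carrier G" using generate_incl by blast
  hence "generate G (carrier G \<inter> {g}) = carrier G" using c fin card_subset_eq by blast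
  hence "subgroup_generated G {g} = G" unfolding subgroup_generated_def by simp
  thus ?thesis unfolding cyclic_group_def using g by blast
qed



definition dh :: "nat \<Rightarrow> nat \<Rightarrow> nat \<Rightarrow> (nat \<Rightarrow> nat)" where
  "dh p a b = (\<lambda>x. if x < p then (a * x + b) mod p else x)"

lemma dihedral_perms_dh: "dihedral_perms p = {dh p a b | a b. a \<in> {1, p - 1} \<and> b < p}"
  unfolding dihedral_perms_def dh_def by simp

lemma dh_id: "dh p 1 0 = id"
  unfolding dh_def by auto

lemma dh_refl_sq:
  assumes "p \<ge> 2" "b < p"
  shows "dh p (p - 1) b \<circ> dh p (p - 1) b = id"
proof
  fix x
  show "(dh p (p - 1) b \<circ> dh p (p - 1) b) x = id x"
  proof (cases "x < p")
    case True
    obtain q where q: "p = Suc (Suc q)" using assms(1) by (metis add_2_eq_Suc le_Suc_ex)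
    have p0: "p > 0" using assms by simp
    have y: "((p - 1) * x + b) mod p < p" using p0 by simp
    have "(dh p (p - 1) b \<circ> dh p (p - 1) b) x = ((p - 1) * (((p - 1) * x + b) mod p) + b) mod p"
      using True y unfolding dh_def by simp
    also have "\<dots> = ((p - 1) * ((p - 1) * x + b) + b) mod p"
      by (metis mod_add_left_eq mod_mult_right_eq)
    also have "(p - 1) * ((p - 1) * x + b) + b = x + p * (q * x + b)"
      unfolding q by (simp add: algebra_simps)
    also have "(x + p * (q * x + b)) mod p = x" using True by simp
    finally show ?thesis by simp
  qed (simp add: dh_def)
qed

lemma dh_refl_ne_id:
  assumes "p \<ge> 3" "b < p"
  shows "dh p (p - 1) b \<noteq> id"
proof
  assume h: "dh p (p - 1) b = id"
  have "dh p (p - 1) b 0 = 0" using h by simp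
  hence "b mod p = 0" using assms unfolding dh_def by simp
  hence b0: "b = 0" using assms by simp
  have "dh p (p - 1) b 1 = 1" using h by simp
  hence "(p - 1) mod p = 1" using assms b0 unfolding dh_def by simp
  hence "p - 1 = 1" using assms by simp
  thus False using assms by simp
qed

lemma dh_rot_fix:
  assumes "b < p" "x < p" "dh p 1 b x = x"
  shows "b = 0"
proof (rule ccontr)
  assume "b \<noteq> 0"
  have e: "(x + b) mod p = x" using assms unfolding dh_def by simp
  show False
  proof (cases "x + b < p")
    case True
    then show ?thesis using e \<open>b \<noteq> 0\<close> by simp
  next
    case False
    hence "(x + b) mod p = x + b - p" using assms by (simp add: le_mod_geq)
    then show ?thesis using e assms \<open>\<not> x + b < p\<close> by linarith
  qed
qed

lemma dh_rot_trans:
  assumes "x < p" "y < p"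
  shows "dh p 1 ((y + p - x) mod p) x = y"
proof -
  have "dh p 1 ((y + p - x) mod p) x = (x + (y + p - x) mod p) mod p"
    using assms unfolding dh_def by simp
  also have "\<dots> = (x + (y + p - x)) mod p" by (simp add: mod_add_right_eq)
  also have "x + (y + p - x) = y + p" using assms by simp
  finally show ?thesis using assms by simp
qed

lemma dh_refl_has_fix:
  assumes "p \<ge> 2" "b < p" "odd p"
  shows "\<exists>x<p. dh p (p - 1) b x = x"
proof (cases "even b")
  case True
  then obtain x where x: "b = 2 * x" by blast
  have xp: "x < p" using x assms by simp
  have "(p - 1) * x + b = x + p * x" using x assms by (simp add: algebra_simps diff_mult_distrib)
  hence "dh p (p - 1) b x = x" using xp unfolding dh_def by simp
  thus ?thesis using xp by blast
next
  case False
  hence "even (b + p)" using assms by simp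
  then obtain x where x: "b + p = 2 * x" by blast
  have xp: "x < p" using x assms by simp
  have x1: "x \<ge> 1" using x assms by simp
  have "(p - 1) * x + b = x + p * (x - 1)"
  proof -
    have "(p - 1) * x + b + p = x + p * (x - 1) + p"
      using x x1 assms by (simp add: algebra_simps diff_mult_distrib diff_mult_distrib2)
    thus ?thesis by simp
  qed
  hence "dh p (p - 1) b x = x" using xp unfolding dh_def by simp
  thus ?thesis using xp by blast
qed

lemma mod_add_cancel_lt:
  fixes a b c p :: nat
  assumes "(a + b) mod p = (a + c) mod p" "b < p" "c < p"
  shows "b = c"
proof (cases "b \<le> c")
  case True
  hence "p dvd (a + c) - (a + b)" using assms mod_eq_dvd_iff_nat[of "a + b" "a + c" p] by simp
  hence "p dvd c - b" by simp
  moreover have "c - b < p" using assms by simp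
  ultimately have "c - b = 0" using dvd_imp_le by (metis neq0_conv not_less)
  thus ?thesis using True by simp
next
  case False
  hence "p dvd (a + b) - (a + c)" using assms mod_eq_dvd_iff_nat[of "a + c" "a + b" p] by simp
  hence "p dvd b - c" by simp
  moreover have "b - c < p" using assms by simp
  ultimately have "b - c = 0" using dvd_imp_le by (metis neq0_conv not_less)
  thus ?thesis using False by simp
qed

lemma dh_refl_fix_unique:
  assumes "b < p" "c < p" "x < p" "dh p (p - 1) b x = x" "dh p (p - 1) c x = x"
  shows "b = c"
proof -
  have "((p - 1) * x + b) mod p = ((p - 1) * x + c) mod p"
    using assms unfolding dh_def by simp
  thus ?thesis using mod_add_cancel_lt assms by blast
qed

lemma dh_inj_b:
  assumes "dh p a b = dh p a' c" "b < p" "c < p"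
  shows "b = c"
proof -
  have "dh p a b 0 = dh p a' c 0" using assms by simp
  thus ?thesis using assms unfolding dh_def by simp
qed

lemma dh_rot_ne_refl:
  assumes "p \<ge> 3" "b < p" "c < p"
  shows "dh p 1 b \<noteq> dh p (p - 1) c"
proof
  assume h: "dh p 1 b = dh p (p - 1) c"
  hence bc: "b = c" using dh_inj_b assms by blast
  have "dh p 1 b 1 = dh p (p - 1) c 1" using h by simp
  hence "(1 + b) mod p = (p - 1 + b) mod p" using assms bc unfolding dh_def by simp
  hence "(b + 1) mod p = (b + (p - 1)) mod p" by (simp add: add.commute)
  hence "1 = p - 1" using mod_add_cancel_lt[of b 1 p "p - 1"] assms by simp
  thus False using assms by simp
qed

lemma card_dihedral:
  assumes "p \<ge> 3"
  shows "card (dihedral_perms p) = 2 * p"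
proof -
  have eq: "dihedral_perms p = (\<lambda>b. dh p 1 b) ` {..<p} \<union> (\<lambda>b. dh p (p - 1) b) ` {..<p}"
    unfolding dihedral_perms_dh by auto
  have i1: "inj_on (\<lambda>b. dh p 1 b) {..<p}" by (rule inj_onI) (use dh_inj_b in auto)
  have i2: "inj_on (\<lambda>b. dh p (p - 1) b) {..<p}" by (rule inj_onI) (use dh_inj_b in auto)
  have disj: "(\<lambda>b. dh p 1 b) ` {..<p} \<inter> (\<lambda>b. dh p (p - 1) b) ` {..<p} = {}"
    using dh_rot_ne_refl[OF assms] by auto
  have "card (dihedral_perms p) = card ((\<lambda>b. dh p 1 b) ` {..<p}) + card ((\<lambda>b. dh p (p - 1) b) ` {..<p})"
    unfolding eq by (rule card_Un_disjoint) (use disj in auto)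
  also have "\<dots> = 2 * p" using card_image[OF i1] card_image[OF i2] by simp
  finally show ?thesis .
qed


lemma transport_at:
  assumes "inj_on f \<Omega>" "x \<in> \<Omega>"
  shows "transport_perm f \<Omega> \<sigma> (f x) = f (\<sigma> x)"
  using assms unfolding transport_perm_def by simp

lemma transport_out:
  assumes "y \<notin> f ` \<Omega>"
  shows "transport_perm f \<Omega> \<sigma> y = y"
  using assms unfolding transport_perm_def by simp

lemma transport_id:
  assumes "inj_on f \<Omega>"
  shows "transport_perm f \<Omega> id = id"
  using assms unfolding transport_perm_def by (auto simp: f_inv_into_f)

lemma transport_comp:
  assumes "inj_on f \<Omega>" "\<tau> ` \<Omega> \<subseteq> \<Omega>"
  shows "transport_perm f \<Omega> (\<sigma> \<circ> \<tau>) = transport_perm f \<Omega> \<sigma> \<circ> transport_perm f \<Omega> \<tau>"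
proof
  fix y
  show "transport_perm f \<Omega> (\<sigma> \<circ> \<tau>) y = (transport_perm f \<Omega> \<sigma> \<circ> transport_perm f \<Omega> \<tau>) y"
  proof (cases "y \<in> f ` \<Omega>")
    case True
    then obtain x where x: "x \<in> \<Omega>" "y = f x" by blast
    have tx: "\<tau> x \<in> \<Omega>" using assms x by blast
    show ?thesis using x tx assms by (simp add: transport_at)
  next
    case False
    then show ?thesis by (simp add: transport_out)
  qed
qed

lemma transport_inj:
  assumes "inj_on f \<Omega>" "\<sigma> ` \<Omega> \<subseteq> \<Omega>" "\<tau> ` \<Omega> \<subseteq> \<Omega>"
    and "\<forall>x. x \<notin> \<Omega> \<longrightarrow> \<sigma> x = x" "\<forall>x. x \<notin> \<Omega> \<longrightarrow> \<tau> x = x"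
    and "transport_perm f \<Omega> \<sigma> = transport_perm f \<Omega> \<tau>"
  shows "\<sigma> = \<tau>"
proof
  fix x
  show "\<sigma> x = \<tau> x"
  proof (cases "x \<in> \<Omega>")
    case True
    have "f (\<sigma> x) = f (\<tau> x)"
      using transport_at[OF assms(1) True, of \<sigma>] transport_at[OF assms(1) True, of \<tau>] assms(6) by simp
    moreover have "\<sigma> x \<in> \<Omega>" "\<tau> x \<in> \<Omega>" using True assms(2,3) by blast+
    ultimately show ?thesis using assms(1) by (meson inj_onD)
  next
    case False
    then show ?thesis using assms(4,5) by simp
  qed
qed

lemma (in group) pow_odd_involution:
  assumes "x \<in> carrier G" "x \<otimes> x = \<one>" "odd m"
  shows "x [^] (m::nat) = x"
proof -
  obtain j where j: "m = 2 * j + 1" using assms(3) oddE by blast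
  have x2: "x [^] (2::nat) = \<one>" using assms by (simp add: numeral_2_eq_2)
  have "x [^] m = (x [^] (2::nat)) [^] j \<otimes> x" unfolding j using assms(1) by (simp add: nat_pow_pow)
  also have "\<dots> = x" using x2 assms(1) by simp
  finally show ?thesis .
qed

locale dih_setup =
  fixes p n :: nat and D Gi :: "(nat \<Rightarrow> nat) set" and \<Omega> :: "nat set" and f :: "nat \<Rightarrow> nat"
  assumes p_prime: "prime p" and p_odd: "odd p"
    and D_sub: "subgroup D (sym_group n)"
    and D_stab: "\<forall>\<sigma>\<in>D. \<sigma> ` \<Omega> \<subseteq> \<Omega> \<and> (\<forall>x. x \<notin> \<Omega> \<longrightarrow> \<sigma> x = x)"
    and f_bij: "bij_betw f \<Omega> {0..<p}"
    and TD: "transport_perm f \<Omega> ` D = dihedral_perms p"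
    and Gi_syl: "is_sylow ((sym_group n)\<lparr>carrier := D\<rparr>) p Gi"
begin

abbreviation "T \<equiv> transport_perm f \<Omega>"
abbreviation "S \<equiv> sym_group n"

lemma p3: "p \<ge> 3"
proof -
  have "p \<ge> 2" using p_prime prime_ge_2_nat by blast
  moreover have "p \<noteq> 2" using p_odd by auto
  ultimately show ?thesis by simp
qed

lemma f_inj: "inj_on f \<Omega>" using f_bij by (simp add: bij_betw_def)
lemma f_img: "f ` \<Omega> = {0..<p}" using f_bij by (simp add: bij_betw_def)
lemma f_lt: "x \<in> \<Omega> \<Longrightarrow> f x < p" using f_img by auto

lemma S_group: "group S" by (rule sym_group_is_group)

lemma D_carrier: "\<sigma> \<in> D \<Longrightarrow> \<sigma> \<in> carrier S"
  using D_sub subgroup.subset by blast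

lemma D_into: "\<sigma> \<in> D \<Longrightarrow> \<sigma> ` \<Omega> \<subseteq> \<Omega>" using D_stab by blast
lemma D_out: "\<sigma> \<in> D \<Longrightarrow> x \<notin> \<Omega> \<Longrightarrow> \<sigma> x = x" using D_stab by blast

lemma id_D: "id \<in> D"
  using subgroup.one_closed[OF D_sub] by (simp add: sym_group_def)

lemma D_comp: "\<sigma> \<in> D \<Longrightarrow> \<tau> \<in> D \<Longrightarrow> \<sigma> \<circ> \<tau> \<in> D"
  using subgroup.m_closed[OF D_sub] by (simp add: sym_group_def)

lemma T_comp: "\<sigma> \<in> D \<Longrightarrow> \<tau> \<in> D \<Longrightarrow> T (\<sigma> \<circ> \<tau>) = T \<sigma> \<circ> T \<tau>"
  using transport_comp[OF f_inj D_into] by blast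

lemma T_inj: "\<sigma> \<in> D \<Longrightarrow> \<tau> \<in> D \<Longrightarrow> T \<sigma> = T \<tau> \<Longrightarrow> \<sigma> = \<tau>"
  using transport_inj[OF f_inj D_into D_into] D_out by blast

lemma T_id: "T id = id" using transport_id[OF f_inj] .

lemma T_at: "x \<in> \<Omega> \<Longrightarrow> T \<sigma> (f x) = f (\<sigma> x)" using transport_at[OF f_inj] .

lemma T_cases: "\<sigma> \<in> D \<Longrightarrow> \<exists>b<p. T \<sigma> = dh p 1 b \<or> T \<sigma> = dh p (p - 1) b"
  using TD unfolding dihedral_perms_dh by blast

lemma dh_in: "b < p \<Longrightarrow> a \<in> {1, p - 1} \<Longrightarrow> \<exists>\<sigma>\<in>D. T \<sigma> = dh p a b"
proof -
  assume "b < p" "a \<in> {1, p - 1}"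
  hence "dh p a b \<in> T ` D" unfolding TD dihedral_perms_dh by blast
  thus ?thesis by force
qed

definition "Rot = {\<sigma> \<in> D. \<exists>b<p. T \<sigma> = dh p 1 b}"

lemma card_D: "card D = 2 * p"
proof -
  have "inj_on T D" by (rule inj_onI) (use T_inj in blast)
  hence "card D = card (T ` D)" by (simp add: card_image)
  thus ?thesis using TD card_dihedral[OF p3] by simp
qed

lemma finite_D: "finite D" using card_D p3 card.infinite by fastforce

lemma refl_facts:
  assumes "\<sigma> \<in> D" "\<sigma> \<notin> Rot"
  shows "\<sigma> \<circ> \<sigma> = id" "\<sigma> \<noteq> id" "\<exists>b<p. T \<sigma> = dh p (p - 1) b"
proof -
  show ex: "\<exists>b<p. T \<sigma> = dh p (p - 1) b" using T_cases[OF assms(1)] assms unfolding Rot_def by blast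
  then obtain b where b: "b < p" "T \<sigma> = dh p (p - 1) b" by blast
  have "T (\<sigma> \<circ> \<sigma>) = id" using T_comp[OF assms(1) assms(1)] b dh_refl_sq p3 by simp
  hence "T (\<sigma> \<circ> \<sigma>) = T id" using T_id by simp
  thus "\<sigma> \<circ> \<sigma> = id" using T_inj D_comp[OF assms(1) assms(1)] id_D by blast
  show "\<sigma> \<noteq> id"
  proof
    assume "\<sigma> = id"
    hence "dh p (p - 1) b = id" using b T_id by simp
    thus False using dh_refl_ne_id[OF p3 b(1)] by simp
  qed
qed

lemma card_Rot: "card Rot = p"
proof -
  have "T ` Rot = (\<lambda>b. dh p 1 b) ` {..<p}"
  proof
    show "T ` Rot \<subseteq> (\<lambda>b. dh p 1 b) ` {..<p}" unfolding Rot_def by auto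
    show "(\<lambda>b. dh p 1 b) ` {..<p} \<subseteq> T ` Rot"
    proof
      fix g assume "g \<in> (\<lambda>b. dh p 1 b) ` {..<p}"
      then obtain b where b: "b < p" "g = dh p 1 b" by blast
      then obtain \<sigma> where s: "\<sigma> \<in> D" "T \<sigma> = dh p 1 b" using dh_in by blast
      hence "\<sigma> \<in> Rot" unfolding Rot_def using b by blast
      thus "g \<in> T ` Rot" using s b by (intro image_eqI[where x=\<sigma>]) auto
    qed
  qed
  moreover have "inj_on T Rot" by (rule inj_onI) (use T_inj in \<open>auto simp: Rot_def\<close>)
  moreover have "inj_on (\<lambda>b. dh p 1 b) {..<p}" by (rule inj_onI) (use dh_inj_b in auto)
  ultimately show ?thesis by (metis card_image card_lessThan)
qed

lemma Gi_sub: "subgroup Gi (sym_group n)"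
  using Gi_syl unfolding is_sylow_def using group.incl_subgroup[OF S_group D_sub] by blast

lemma Gi_subD: "Gi \<subseteq> D"
  using Gi_syl unfolding is_sylow_def using subgroup.subset by fastforce

lemma card_Gi: "card Gi = p"
proof -
  have "order (S\<lparr>carrier := D\<rparr>) = 2 * p" using card_D by (simp add: order_def)
  moreover have "multiplicity p (2 * p) = 1"
  proof -
    have "multiplicity p (p * 2) = Suc (multiplicity p 2)" using p3 by (simp add: multiplicity_times_same)
    moreover have "\<not> p dvd 2" using p3 by (metis dvd_imp_le not_less_eq_eq numeral_2_eq_2 numeral_3_eq_3 zero_less_numeral)
    ultimately show ?thesis by (simp add: not_dvd_imp_multiplicity_0 mult.commute)
  qed
  ultimately show ?thesis using Gi_syl unfolding is_sylow_def by simp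
qed

lemma Gi_pow: "\<sigma> \<in> Gi \<Longrightarrow> \<sigma> [^]\<^bsub>S\<^esub> p = id"
proof -
  assume s: "\<sigma> \<in> Gi"
  have g: "group (S\<lparr>carrier := Gi\<rparr>)" using group.subgroup_imp_group[OF S_group Gi_sub] .
  have "\<sigma> [^]\<^bsub>S\<lparr>carrier := Gi\<rparr>\<^esub> order (S\<lparr>carrier := Gi\<rparr>) = \<one>\<^bsub>S\<lparr>carrier := Gi\<rparr>\<^esub>"
    using group.pow_order_eq_1[OF g] s by simp
  hence "\<sigma> [^]\<^bsub>S\<^esub> card Gi = \<one>\<^bsub>S\<^esub>"
    unfolding order_def by (simp add: monoid.nat_pow_consistent[OF group.is_monoid[OF S_group], symmetric])
  hence "\<sigma> [^]\<^bsub>S\<^esub> card Gi = id" by (simp add: sym_group_one)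
  thus ?thesis using card_Gi by simp
qed

lemma Gi_Rot: "Gi = Rot"
proof -
  have "Gi \<subseteq> Rot"
  proof
    fix \<sigma> assume s: "\<sigma> \<in> Gi"
    hence sD: "\<sigma> \<in> D" using Gi_subD by blast
    show "\<sigma> \<in> Rot"
    proof (rule ccontr)
      assume "\<sigma> \<notin> Rot"
      hence "\<sigma> \<circ> \<sigma> = id" "\<sigma> \<noteq> id" using refl_facts sD by auto
      hence "\<sigma> \<otimes>\<^bsub>S\<^esub> \<sigma> = \<one>\<^bsub>S\<^esub>" by (simp add: sym_group_def)
      hence "\<sigma> [^]\<^bsub>S\<^esub> p = \<sigma>" using group.pow_odd_involution[OF S_group D_carrier[OF sD]] p_odd by blast
      thus False using Gi_pow[OF s] \<open>\<sigma> \<noteq> id\<close> by simp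
    qed
  qed
  moreover have "finite Rot" using finite_D unfolding Rot_def by simp
  ultimately show ?thesis using card_Gi card_Rot by (simp add: card_subset_eq)
qed

lemma rot_nofix: "\<sigma> \<in> Gi \<Longrightarrow> x \<in> \<Omega> \<Longrightarrow> \<sigma> x = x \<Longrightarrow> \<sigma> = id"
proof -
  assume a: "\<sigma> \<in> Gi" "x \<in> \<Omega>" "\<sigma> x = x"
  have "\<sigma> \<in> Rot" using Gi_Rot a(1) by simp
  then obtain b where b: "b < p" "T \<sigma> = dh p 1 b" "\<sigma> \<in> D" unfolding Rot_def by blast
  have "dh p 1 b (f x) = f x" using T_at[OF a(2), of \<sigma>] a b by simp
  hence "b = 0" using dh_rot_fix b f_lt a by blast
  hence "T \<sigma> = T id" using b T_id dh_id by simp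
  thus "\<sigma> = id" using T_inj b id_D by blast
qed

lemma rot_trans: "x \<in> \<Omega> \<Longrightarrow> y \<in> \<Omega> \<Longrightarrow> \<exists>\<sigma>\<in>Gi. \<sigma> x = y"
proof -
  assume xy: "x \<in> \<Omega>" "y \<in> \<Omega>"
  define b where "b = (f y + p - f x) mod p"
  have bp: "b < p" using p3 unfolding b_def by simp
  obtain \<sigma> where s: "\<sigma> \<in> D" "T \<sigma> = dh p 1 b" using dh_in[OF bp] by blast
  hence "\<sigma> \<in> Rot" using bp unfolding Rot_def by blast
  hence sG: "\<sigma> \<in> Gi" using Gi_Rot by simp
  have "f (\<sigma> x) = dh p 1 b (f x)" using T_at[OF xy(1), of \<sigma>] s by simp
  also have "\<dots> = f y" unfolding b_def using dh_rot_trans f_lt xy by blast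
  finally have "\<sigma> x = y" using f_inj D_into[OF s(1)] xy by (meson image_subset_iff inj_onD)
  thus ?thesis using sG by blast
qed

lemma refl_fix: "\<sigma> \<in> D \<Longrightarrow> \<sigma> \<notin> Gi \<Longrightarrow> \<exists>\<alpha>\<in>\<Omega>. \<sigma> \<alpha> = \<alpha>"
proof -
  assume s: "\<sigma> \<in> D" "\<sigma> \<notin> Gi"
  have "\<sigma> \<notin> Rot" using Gi_Rot s by simp
  then obtain b where b: "b < p" "T \<sigma> = dh p (p - 1) b" using refl_facts s by blast
  have "\<exists>x<p. dh p (p - 1) b x = x" using dh_refl_has_fix[of p b] p3 b(1) p_odd by simp
  then obtain x where x: "x < p" "dh p (p - 1) b x = x" by blast
  have "x \<in> f ` \<Omega>" using f_img x by simp
  then obtain \<alpha> where a: "\<alpha> \<in> \<Omega>" "f \<alpha> = x" by blast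
  have "f (\<sigma> \<alpha>) = f \<alpha>" using T_at[OF a(1), of \<sigma>] b x a by simp
  hence "\<sigma> \<alpha> = \<alpha>" using f_inj D_into[OF s(1)] a by (meson image_subset_iff inj_onD)
  thus ?thesis using a by blast
qed

lemma refl_unique:
  assumes "\<sigma> \<in> D" "\<sigma> \<notin> Gi" "\<tau> \<in> D" "\<tau> \<notin> Gi" "\<alpha> \<in> \<Omega>" "\<sigma> \<alpha> = \<alpha>" "\<tau> \<alpha> = \<alpha>"
  shows "\<sigma> = \<tau>"
proof -
  have "\<sigma> \<notin> Rot" "\<tau> \<notin> Rot" using Gi_Rot assms by simp_all
  then obtain b c where b: "b < p" "T \<sigma> = dh p (p - 1) b" and c: "c < p" "T \<tau> = dh p (p - 1) c"
    using refl_facts assms by meson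
  have "dh p (p - 1) b (f \<alpha>) = f \<alpha>" using T_at[OF assms(5), of \<sigma>] b assms by simp
  moreover have "dh p (p - 1) c (f \<alpha>) = f \<alpha>" using T_at[OF assms(5), of \<tau>] c assms by simp
  ultimately have "b = c" using dh_refl_fix_unique b c f_lt assms(5) by blast
  thus ?thesis using T_inj assms b c by simp
qed

lemma refl_sq: "\<sigma> \<in> D \<Longrightarrow> \<sigma> \<notin> Gi \<Longrightarrow> \<sigma> \<circ> \<sigma> = id \<and> \<sigma> \<noteq> id"
proof -
  assume "\<sigma> \<in> D" "\<sigma> \<notin> Gi"
  moreover hence "\<sigma> \<notin> Rot" using Gi_Rot by simp
  ultimately show ?thesis using refl_facts by blast
qed

end


lemma restr_comp:
  assumes "\<tau> ` \<Omega> \<subseteq> \<Omega>"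
  shows "restr_perm \<Omega> (\<sigma> \<circ> \<tau>) = restr_perm \<Omega> \<sigma> \<circ> restr_perm \<Omega> \<tau>"
proof
  fix x show "restr_perm \<Omega> (\<sigma> \<circ> \<tau>) x = (restr_perm \<Omega> \<sigma> \<circ> restr_perm \<Omega> \<tau>) x"
    using assms unfolding restr_perm_def by auto
qed

lemma restr_id: "restr_perm \<Omega> id = id"
  unfolding restr_perm_def by auto

locale main_setup =
  fixes p k n :: nat
    and H Hp H2 :: "(nat \<Rightarrow> nat) set"
    and \<Omega> :: "nat \<Rightarrow> nat set"
    and Gi :: "nat \<Rightarrow> (nat \<Rightarrow> nat) set"
  assumes p_prime: "prime p" and p_odd: "odd p"
    and n_def: "n = p * k"
    and H_sub: "subgroup H (sym_group n)"
    and orbs: "orbits ((sym_group n)\<lparr>carrier := H\<rparr>) {1..n} (\<lambda>g. g) = \<Omega> ` {1..k}"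
    and \<Omega>_inj: "inj_on \<Omega> {1..k}"
    and \<Omega>_card: "\<forall>i \<in> {1..k}. card (\<Omega> i) = p"
    and dihedral: "\<forall>i \<in> {1..k}.
        perm_isomorphic (restr_group (\<Omega> i) H) (\<Omega> i) (dihedral_perms p) {0..<p}"
    and Gi_sylow: "\<forall>i \<in> {1..k}.
        is_sylow ((sym_group n)\<lparr>carrier := restr_group (\<Omega> i) H\<rparr>) p (Gi i)"
    and Hp_sylow: "is_sylow ((sym_group n)\<lparr>carrier := H\<rparr>) p Hp"
    and H2_sylow: "is_sylow ((sym_group n)\<lparr>carrier := H\<rparr>) 2 H2"
begin

abbreviation "S \<equiv> sym_group n"
abbreviation "GH \<equiv> S\<lparr>carrier := H\<rparr>"
abbreviation "R i \<equiv> restr_perm (\<Omega> i)"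
abbreviation "D i \<equiv> restr_group (\<Omega> i) H"

lemma S_grp: "group S" by (rule sym_group_is_group)
lemma GH_grp: "group GH" using group.subgroup_imp_group[OF S_grp H_sub] .

lemma finite_S: "finite (carrier S)"
proof -
  have "card (carrier S) = fact n" by (rule sym_group_card_carrier)
  thus ?thesis using card.infinite by fastforce
qed

lemma H_carrier: "H \<subseteq> carrier S" using H_sub subgroup.subset by blast
lemma finite_H: "finite H" using finite_S H_carrier finite_subset by blast

lemma H_perm: "\<sigma> \<in> H \<Longrightarrow> \<sigma> permutes {1..n}"
  using H_carrier sym_group_carrier by blast

lemma id_H: "id \<in> H" using subgroup.one_closed[OF H_sub] by (simp add: sym_group_one)
lemma comp_H: "\<sigma> \<in> H \<Longrightarrow> \<tau> \<in> H \<Longrightarrow> \<sigma> \<circ> \<tau> \<in> H"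
  using subgroup.m_closed[OF H_sub] by (simp add: sym_group_mult)

lemma orbit_GH: "orbit GH (\<lambda>g. g) x = {g x | g. g \<in> H}"
  unfolding orbit_def by simp

lemma orbits_GH: "orbits GH {1..n} (\<lambda>g. g) = {{g x | g. g \<in> H} | x. x \<in> {1..n}}"
  unfolding orbits_def orbit_GH by simp

lemma Omega_orbit: "i \<in> {1..k} \<Longrightarrow> \<exists>x0\<in>{1..n}. \<Omega> i = {g x0 | g. g \<in> H}"
proof -
  assume "i \<in> {1..k}"
  hence "\<Omega> i \<in> orbits GH {1..n} (\<lambda>g. g)" using orbs by blast
  thus ?thesis unfolding orbits_GH by blast
qed

lemma Omega_inv: "i \<in> {1..k} \<Longrightarrow> \<sigma> \<in> H \<Longrightarrow> y \<in> \<Omega> i \<Longrightarrow> \<sigma> y \<in> \<Omega> i"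
proof -
  assume a: "i \<in> {1..k}" "\<sigma> \<in> H" "y \<in> \<Omega> i"
  obtain x0 where x0: "x0 \<in> {1..n}" "\<Omega> i = {g x0 | g. g \<in> H}" using Omega_orbit a(1) by blast
  obtain g where g: "g \<in> H" "y = g x0" using a(3) x0 by blast
  have "\<sigma> y = (\<sigma> \<circ> g) x0" using g by simp
  moreover have "\<sigma> \<circ> g \<in> H" using comp_H a(2) g(1) by blast
  ultimately show ?thesis using x0 by blast
qed

lemma Omega_into: "i \<in> {1..k} \<Longrightarrow> \<sigma> \<in> H \<Longrightarrow> \<sigma> ` \<Omega> i \<subseteq> \<Omega> i"
  using Omega_inv by blast

lemma Omega_sub: "i \<in> {1..k} \<Longrightarrow> \<Omega> i \<subseteq> {1..n}"
proof
  fix y assume a: "i \<in> {1..k}" "y \<in> \<Omega> i"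
  obtain x0 where x0: "x0 \<in> {1..n}" "\<Omega> i = {g x0 | g. g \<in> H}" using Omega_orbit a(1) by blast
  obtain g where g: "g \<in> H" "y = g x0" using a(2) x0 by blast
  show "y \<in> {1..n}" using permutes_in_image[OF H_perm[OF g(1)]] x0 g by simp
qed

lemma cover: "x \<in> {1..n} \<Longrightarrow> \<exists>i\<in>{1..k}. x \<in> \<Omega> i \<and> orbit GH (\<lambda>g. g) x = \<Omega> i"
proof -
  assume x: "x \<in> {1..n}"
  have "orbit GH (\<lambda>g. g) x \<in> orbits GH {1..n} (\<lambda>g. g)" unfolding orbits_def using x by blast
  then obtain i where i: "i \<in> {1..k}" "orbit GH (\<lambda>g. g) x = \<Omega> i" using orbs by auto
  have "x \<in> orbit GH (\<lambda>g. g) x" unfolding orbit_GH by (rule CollectI, rule exI[of _ id]) (simp add: id_H)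
  thus ?thesis using i by auto
qed

lemma R_out: "x \<notin> \<Omega> i \<Longrightarrow> R i \<sigma> x = x" unfolding restr_perm_def by simp
lemma R_in: "x \<in> \<Omega> i \<Longrightarrow> R i \<sigma> x = \<sigma> x" unfolding restr_perm_def by simp

lemma R_comp: "i \<in> {1..k} \<Longrightarrow> \<tau> \<in> H \<Longrightarrow> R i (\<sigma> \<circ> \<tau>) = R i \<sigma> \<circ> R i \<tau>"
  using restr_comp Omega_into by blast

lemma inv_H: "\<sigma> \<in> H \<Longrightarrow> inv\<^bsub>S\<^esub> \<sigma> \<in> H \<and> \<sigma> \<circ> inv\<^bsub>S\<^esub> \<sigma> = id \<and> inv\<^bsub>S\<^esub> \<sigma> \<circ> \<sigma> = id"
proof -
  assume s: "\<sigma> \<in> H"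
  have c: "\<sigma> \<in> carrier S" using s H_carrier by blast
  have "inv\<^bsub>S\<^esub> \<sigma> \<in> H" using subgroup.m_inv_closed[OF H_sub s] .
  moreover have "\<sigma> \<otimes>\<^bsub>S\<^esub> inv\<^bsub>S\<^esub> \<sigma> = \<one>\<^bsub>S\<^esub>" using group.r_inv[OF S_grp c] .
  moreover have "inv\<^bsub>S\<^esub> \<sigma> \<otimes>\<^bsub>S\<^esub> \<sigma> = \<one>\<^bsub>S\<^esub>" using group.l_inv[OF S_grp c] .
  ultimately show ?thesis by (simp add: sym_group_mult sym_group_one)
qed

lemma R_carrier: "i \<in> {1..k} \<Longrightarrow> \<sigma> \<in> H \<Longrightarrow> R i \<sigma> \<in> carrier S"
proof -
  assume a: "i \<in> {1..k}" "\<sigma> \<in> H"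
  define \<tau> where "\<tau> = inv\<^bsub>S\<^esub> \<sigma>"
  have t: "\<tau> \<in> H" "\<sigma> \<circ> \<tau> = id" "\<tau> \<circ> \<sigma> = id" using inv_H[OF a(2)] unfolding \<tau>_def by auto
  have "R i \<sigma> \<circ> R i \<tau> = id" using R_comp[OF a(1) t(1), of \<sigma>] t restr_id by simp
  moreover have "R i \<tau> \<circ> R i \<sigma> = id" using R_comp[OF a(1) a(2), of \<tau>] t restr_id by simp
  ultimately have "bij (R i \<sigma>)" using o_bij by blast
  hence u: "\<forall>y. \<exists>!x. R i \<sigma> x = y" by (simp add: bij_iff)
  have o: "\<forall>x. x \<notin> {1..n} \<longrightarrow> R i \<sigma> x = x"
  proof (intro allI impI)
    fix x assume "x \<notin> {1..n}"
    hence "x \<notin> \<Omega> i" using Omega_sub[OF a(1)] by blast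
    thus "R i \<sigma> x = x" by (rule R_out)
  qed
  have "R i \<sigma> permutes {1..n}" unfolding permutes_def using u o by (intro conjI)
  thus ?thesis by (simp add: sym_group_carrier)
qed

lemma R_hom: "i \<in> {1..k} \<Longrightarrow> group_hom GH S (R i)"
proof -
  assume a: "i \<in> {1..k}"
  have "R i \<in> hom GH S"
    unfolding hom_def using R_carrier[OF a] R_comp[OF a] by (auto simp: sym_group_mult)
  thus ?thesis using GH_grp S_grp by (simp add: group_hom_def group_hom_axioms_def)
qed

lemma D_sub: "i \<in> {1..k} \<Longrightarrow> subgroup (D i) S"
  using group_hom.img_is_subgroup[OF R_hom] unfolding restr_group_def by simp

lemma D_stab: "i \<in> {1..k} \<Longrightarrow> \<forall>\<sigma>\<in>D i. \<sigma> ` \<Omega> i \<subseteq> \<Omega> i \<and> (\<forall>x. x \<notin> \<Omega> i \<longrightarrow> \<sigma> x = x)"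
proof -
  assume a: "i \<in> {1..k}"
  show ?thesis
  proof
    fix \<sigma> assume "\<sigma> \<in> D i"
    then obtain \<tau> where t: "\<tau> \<in> H" "\<sigma> = R i \<tau>" unfolding restr_group_def by blast
    have "\<sigma> ` \<Omega> i \<subseteq> \<Omega> i"
    proof
      fix y assume "y \<in> \<sigma> ` \<Omega> i"
      then obtain x where x: "x \<in> \<Omega> i" "y = \<sigma> x" by blast
      have "y = \<tau> x" using x t R_in by simp
      thus "y \<in> \<Omega> i" using Omega_inv[OF a t(1) x(1)] by simp
    qed
    moreover have "\<forall>x. x \<notin> \<Omega> i \<longrightarrow> \<sigma> x = x" using t R_out by simp
    ultimately show "\<sigma> ` \<Omega> i \<subseteq> \<Omega> i \<and> (\<forall>x. x \<notin> \<Omega> i \<longrightarrow> \<sigma> x = x)" by blast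
  qed
qed

lemma dih: "i \<in> {1..k} \<Longrightarrow> \<exists>f. dih_setup p n (D i) (Gi i) (\<Omega> i) f"
proof -
  assume a: "i \<in> {1..k}"
  obtain f where f: "bij_betw f (\<Omega> i) {0..<p}" "transport_perm f (\<Omega> i) ` D i = dihedral_perms p"
    using dihedral a unfolding perm_isomorphic_def by blast
  have "dih_setup p n (D i) (Gi i) (\<Omega> i) f"
    using p_prime p_odd D_sub[OF a] D_stab[OF a] f Gi_sylow a by (simp add: dih_setup_def)
  thus ?thesis by blast
qed

lemma dfacts:
  assumes "i \<in> {1..k}"
  shows "card (D i) = 2 * p" "card (Gi i) = p" "subgroup (Gi i) S" "Gi i \<subseteq> D i"
    "\<And>\<sigma>. \<sigma> \<in> D i \<Longrightarrow> \<sigma> \<notin> Gi i \<Longrightarrow> \<sigma> \<circ> \<sigma> = id \<and> \<sigma> \<noteq> id"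
    "\<And>\<sigma> x. \<sigma> \<in> Gi i \<Longrightarrow> x \<in> \<Omega> i \<Longrightarrow> \<sigma> x = x \<Longrightarrow> \<sigma> = id"
    "\<And>x y. x \<in> \<Omega> i \<Longrightarrow> y \<in> \<Omega> i \<Longrightarrow> \<exists>\<sigma>\<in>Gi i. \<sigma> x = y"
    "\<And>\<sigma>. \<sigma> \<in> D i \<Longrightarrow> \<sigma> \<notin> Gi i \<Longrightarrow> \<exists>\<alpha>\<in>\<Omega> i. \<sigma> \<alpha> = \<alpha>"
    "\<And>\<sigma> \<tau> \<alpha>. \<sigma> \<in> D i \<Longrightarrow> \<sigma> \<notin> Gi i \<Longrightarrow> \<tau> \<in> D i \<Longrightarrow> \<tau> \<notin> Gi i \<Longrightarrow> \<alpha> \<in> \<Omega> i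
       \<Longrightarrow> \<sigma> \<alpha> = \<alpha> \<Longrightarrow> \<tau> \<alpha> = \<alpha> \<Longrightarrow> \<sigma> = \<tau>"
    "\<And>\<sigma>. \<sigma> \<in> Gi i \<Longrightarrow> \<sigma> [^]\<^bsub>S\<^esub> p = id"
proof -
  obtain f where "dih_setup p n (D i) (Gi i) (\<Omega> i) f" using dih[OF assms] by blast
  then interpret ds: dih_setup p n "D i" "Gi i" "\<Omega> i" f .
  show "card (D i) = 2 * p" by (rule ds.card_D)
  show "card (Gi i) = p" by (rule ds.card_Gi)
  show "subgroup (Gi i) S" by (rule ds.Gi_sub)
  show "Gi i \<subseteq> D i" by (rule ds.Gi_subD)
  show "\<And>\<sigma>. \<sigma> \<in> D i \<Longrightarrow> \<sigma> \<notin> Gi i \<Longrightarrow> \<sigma> \<circ> \<sigma> = id \<and> \<sigma> \<noteq> id" by (rule ds.refl_sq)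
  show "\<And>\<sigma> x. \<sigma> \<in> Gi i \<Longrightarrow> x \<in> \<Omega> i \<Longrightarrow> \<sigma> x = x \<Longrightarrow> \<sigma> = id" by (rule ds.rot_nofix)
  show "\<And>x y. x \<in> \<Omega> i \<Longrightarrow> y \<in> \<Omega> i \<Longrightarrow> \<exists>\<sigma>\<in>Gi i. \<sigma> x = y" by (rule ds.rot_trans)
  show "\<And>\<sigma>. \<sigma> \<in> D i \<Longrightarrow> \<sigma> \<notin> Gi i \<Longrightarrow> \<exists>\<alpha>\<in>\<Omega> i. \<sigma> \<alpha> = \<alpha>" by (rule ds.refl_fix)
  show "\<And>\<sigma> \<tau> \<alpha>. \<sigma> \<in> D i \<Longrightarrow> \<sigma> \<notin> Gi i \<Longrightarrow> \<tau> \<in> D i \<Longrightarrow> \<tau> \<notin> Gi i \<Longrightarrow> \<alpha> \<in> \<Omega> i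
       \<Longrightarrow> \<sigma> \<alpha> = \<alpha> \<Longrightarrow> \<tau> \<alpha> = \<alpha> \<Longrightarrow> \<sigma> = \<tau>" by (rule ds.refl_unique)
  show "\<And>\<sigma>. \<sigma> \<in> Gi i \<Longrightarrow> \<sigma> [^]\<^bsub>S\<^esub> p = id" by (rule ds.Gi_pow)
qed

end


context main_setup
begin

lemma pow_cons [simp]: "x [^]\<^bsub>S\<lparr>carrier := X\<rparr>\<^esub> (m::nat) = x [^]\<^bsub>S\<^esub> m"
  by (rule monoid.nat_pow_consistent[OF group.is_monoid[OF S_grp], symmetric])

lemma sub_pow_card: "subgroup X S \<Longrightarrow> \<sigma> \<in> X \<Longrightarrow> \<sigma> [^]\<^bsub>S\<^esub> (card X) = id"
proof -
  assume X: "subgroup X S" and s: "\<sigma> \<in> X"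
  have g: "group (S\<lparr>carrier := X\<rparr>)" using group.subgroup_imp_group[OF S_grp X] .
  have "\<sigma> [^]\<^bsub>S\<lparr>carrier := X\<rparr>\<^esub> order (S\<lparr>carrier := X\<rparr>) = \<one>\<^bsub>S\<lparr>carrier := X\<rparr>\<^esub>"
    using group.pow_order_eq_1[OF g] s by simp
  hence "\<sigma> [^]\<^bsub>S\<^esub> card X = \<one>\<^bsub>S\<^esub>" unfolding order_def by simp
  thus ?thesis by (simp add: sym_group_one)
qed

lemma pow_H: "\<sigma> \<in> H \<Longrightarrow> \<sigma> [^]\<^bsub>S\<^esub> (m::nat) \<in> H"
proof -
  assume "\<sigma> \<in> H"
  hence "\<sigma> [^]\<^bsub>GH\<^esub> m \<in> carrier GH" using monoid.nat_pow_closed[OF group.is_monoid[OF GH_grp]] by simp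
  thus ?thesis by simp
qed

lemma R_pow: "i \<in> {1..k} \<Longrightarrow> \<sigma> \<in> H \<Longrightarrow> R i (\<sigma> [^]\<^bsub>S\<^esub> (m::nat)) = (R i \<sigma>) [^]\<^bsub>S\<^esub> m"
proof -
  assume a: "i \<in> {1..k}" "\<sigma> \<in> H"
  have "R i (\<sigma> [^]\<^bsub>GH\<^esub> m) = (R i \<sigma>) [^]\<^bsub>S\<^esub> m"
    using group_hom.hom_nat_pow[OF R_hom[OF a(1)], of \<sigma> m] a(2) by simp
  thus ?thesis by simp
qed

lemma R_D: "\<sigma> \<in> H \<Longrightarrow> R i \<sigma> \<in> D i" unfolding restr_group_def by blast

lemma determ: "\<sigma> \<in> carrier S \<Longrightarrow> \<forall>i\<in>{1..k}. R i \<sigma> = id \<Longrightarrow> \<sigma> = id"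
proof
  fix x assume s: "\<sigma> \<in> carrier S" and r: "\<forall>i\<in>{1..k}. R i \<sigma> = id"
  show "\<sigma> x = id x"
  proof (cases "x \<in> {1..n}")
    case True
    then obtain i where i: "i \<in> {1..k}" "x \<in> \<Omega> i" using cover by blast
    have "\<sigma> x = R i \<sigma> x" using R_in[OF i(2)] by simp
    also have "\<dots> = x" using r i by simp
    finally show ?thesis by simp
  next
    case False
    have "\<sigma> permutes {1..n}" using s sym_group_carrier by blast
    then show ?thesis using False permutes_not_in by fastforce
  qed
qed

lemma D_pow: "i \<in> {1..k} \<Longrightarrow> \<tau> \<in> D i \<Longrightarrow> \<tau> [^]\<^bsub>S\<^esub> (2 * p) = id"
  using sub_pow_card[OF D_sub] dfacts(1) by metis

lemma exp2p: "\<sigma> \<in> H \<Longrightarrow> \<sigma> [^]\<^bsub>S\<^esub> (2 * p) = id"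
proof -
  assume s: "\<sigma> \<in> H"
  have "\<forall>i\<in>{1..k}. R i (\<sigma> [^]\<^bsub>S\<^esub> (2 * p)) = id"
    using R_pow s D_pow R_D by simp
  moreover have "\<sigma> [^]\<^bsub>S\<^esub> (2 * p) \<in> carrier S" using pow_H[OF s] H_carrier by blast
  ultimately show ?thesis using determ by blast
qed

lemma p_ne2: "p \<noteq> 2" using p_odd by auto
lemma p_gt2: "p > 2" using p_ne2 prime_ge_2_nat[OF p_prime] by simp

lemma cardH_pos: "card H > 0" using finite_H id_H card_gt_0_iff by blast

abbreviation "ma \<equiv> multiplicity 2 (card H)"
abbreviation "mp \<equiv> multiplicity p (card H)"

lemma cardH: "card H = 2 ^ ma * p ^ mp"
proof (rule prime_factors_2p[OF cardH_pos p_prime p_ne2], intro allI impI)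
  fix q :: nat assume q: "prime q" "q dvd card H"
  have "\<forall>x\<in>carrier GH. x [^]\<^bsub>GH\<^esub> (2 * p) = \<one>\<^bsub>GH\<^esub>" using exp2p by (simp add: sym_group_one)
  moreover have "finite (carrier GH)" using finite_H by simp
  moreover have "q dvd order GH" using q by (simp add: order_def)
  ultimately have "q dvd 2 * p" using group.exp_prime_dvd[OF GH_grp] q(1) by blast
  hence "q dvd 2 \<or> q dvd p" using q(1) prime_dvd_mult_iff by blast
  thus "q = 2 \<or> q = p" using q(1) p_prime primes_dvd_imp_eq two_is_prime_nat by blast
qed

lemma cardHp: "card Hp = p ^ mp" using Hp_sylow unfolding is_sylow_def by (simp add: order_def)
lemma cardH2: "card H2 = 2 ^ ma" using H2_sylow unfolding is_sylow_def by (simp add: order_def)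

lemma Hp_subGH: "subgroup Hp GH" using Hp_sylow unfolding is_sylow_def by blast
lemma H2_subGH: "subgroup H2 GH" using H2_sylow unfolding is_sylow_def by blast
lemma Hp_sub: "subgroup Hp S" using group.incl_subgroup[OF S_grp H_sub Hp_subGH] .
lemma H2_sub: "subgroup H2 S" using group.incl_subgroup[OF S_grp H_sub H2_subGH] .
lemma Hp_H: "Hp \<subseteq> H" using subgroup.subset[OF Hp_subGH] by simp
lemma H2_H: "H2 \<subseteq> H" using subgroup.subset[OF H2_subGH] by simp
lemma finite_Hp: "finite Hp" using Hp_H finite_H finite_subset by blast
lemma finite_H2: "finite H2" using H2_H finite_H finite_subset by blast

lemma key_odd:
  assumes s: "\<sigma> \<in> H" and N: "\<sigma> [^]\<^bsub>S\<^esub> (N::nat) = id" "odd N" and i: "i \<in> {1..k}"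
  shows "R i \<sigma> \<in> Gi i"
proof (rule ccontr)
  assume nG: "R i \<sigma> \<notin> Gi i"
  have rs: "R i \<sigma> \<circ> R i \<sigma> = id" "R i \<sigma> \<noteq> id" using dfacts(5)[OF i R_D[OF s] nG] by auto
  have c: "R i \<sigma> \<in> carrier S" using R_carrier[OF i s] .
  have "R i \<sigma> \<otimes>\<^bsub>S\<^esub> R i \<sigma> = \<one>\<^bsub>S\<^esub>" using rs by (simp add: sym_group_mult sym_group_one)
  hence "(R i \<sigma>) [^]\<^bsub>S\<^esub> N = R i \<sigma>" using group.pow_odd_involution[OF S_grp c _ N(2)] by simp
  moreover have "(R i \<sigma>) [^]\<^bsub>S\<^esub> N = id" using R_pow[OF i s, of N] N(1) restr_id by simp
  ultimately show False using rs(2) by simp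
qed

lemma key_back:
  assumes s: "\<sigma> \<in> H" and r: "\<forall>i\<in>{1..k}. R i \<sigma> \<in> Gi i"
  shows "\<sigma> [^]\<^bsub>S\<^esub> p = id"
proof -
  have "\<forall>i\<in>{1..k}. R i (\<sigma> [^]\<^bsub>S\<^esub> p) = id" using R_pow s r dfacts(10) by simp
  moreover have "\<sigma> [^]\<^bsub>S\<^esub> p \<in> carrier S" using pow_H[OF s] H_carrier by blast
  ultimately show ?thesis using determ by blast
qed

definition "K = {\<sigma> \<in> H. \<sigma> [^]\<^bsub>S\<^esub> p = id}"

lemma K_char: "\<sigma> \<in> H \<Longrightarrow> \<sigma> \<in> K \<longleftrightarrow> (\<forall>i\<in>{1..k}. R i \<sigma> \<in> Gi i)"
proof -
  assume s: "\<sigma> \<in> H"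
  show ?thesis
  proof
    assume "\<sigma> \<in> K"
    hence e: "\<sigma> [^]\<^bsub>S\<^esub> p = id" unfolding K_def by simp
    show "\<forall>i\<in>{1..k}. R i \<sigma> \<in> Gi i"
    proof
      fix i assume "i \<in> {1..k}"
      thus "R i \<sigma> \<in> Gi i" using key_odd[OF s e p_odd] by simp
    qed
  next
    assume "\<forall>i\<in>{1..k}. R i \<sigma> \<in> Gi i"
    hence "\<sigma> [^]\<^bsub>S\<^esub> p = id" using key_back[OF s] by simp
    thus "\<sigma> \<in> K" unfolding K_def using s by simp
  qed
qed

lemma Hp_K: "Hp \<subseteq> K"
proof
  fix \<sigma> assume s: "\<sigma> \<in> Hp"
  have sH: "\<sigma> \<in> H" using s Hp_H by blast
  have "\<sigma> [^]\<^bsub>S\<^esub> (p ^ mp) = id" using sub_pow_card[OF Hp_sub s] cardHp by simp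
  moreover have "odd (p ^ mp)" using p_odd by simp
  ultimately have "\<forall>i\<in>{1..k}. R i \<sigma> \<in> Gi i" using key_odd[OF sH] by simp
  thus "\<sigma> \<in> K" using K_char sH by blast
qed

lemma K_sub: "subgroup K S"
proof (rule group.subgroupI[OF S_grp])
  show "K \<subseteq> carrier S" unfolding K_def using H_carrier by blast
  show "K \<noteq> {}" using Hp_K subgroup.one_closed[OF Hp_sub] by blast
next
  fix a assume a: "a \<in> K"
  have aH: "a \<in> H" using a unfolding K_def by blast
  have iH: "inv\<^bsub>S\<^esub> a \<in> H" using inv_H[OF aH] by blast
  have "\<forall>i\<in>{1..k}. R i (inv\<^bsub>S\<^esub> a) \<in> Gi i"
  proof
    fix i assume i: "i \<in> {1..k}"
    have "R i (inv\<^bsub>GH\<^esub> a) = inv\<^bsub>S\<^esub> (R i a)" using group_hom.hom_inv[OF R_hom[OF i]] aH by simp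
    moreover have "inv\<^bsub>GH\<^esub> a = inv\<^bsub>S\<^esub> a" using group.m_inv_consistent[OF S_grp H_sub aH] .
    moreover have "R i a \<in> Gi i" using K_char aH a i by blast
    ultimately show "R i (inv\<^bsub>S\<^esub> a) \<in> Gi i" using subgroup.m_inv_closed[OF dfacts(3)[OF i]] by simp
  qed
  thus "inv\<^bsub>S\<^esub> a \<in> K" using K_char iH by blast
next
  fix a b assume a: "a \<in> K" and b: "b \<in> K"
  have aH: "a \<in> H" and bH: "b \<in> H" using a b unfolding K_def by blast+
  have abH: "a \<circ> b \<in> H" using comp_H aH bH by blast
  have "\<forall>i\<in>{1..k}. R i (a \<circ> b) \<in> Gi i"
  proof
    fix i assume i: "i \<in> {1..k}"
    have "R i a \<in> Gi i" "R i b \<in> Gi i" using K_char aH bH a b i by blast+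
    hence "R i a \<otimes>\<^bsub>S\<^esub> R i b \<in> Gi i" using subgroup.m_closed[OF dfacts(3)[OF i]] by blast
    thus "R i (a \<circ> b) \<in> Gi i" using R_comp[OF i bH] by (simp add: sym_group_mult)
  qed
  thus "a \<otimes>\<^bsub>S\<^esub> b \<in> K" using K_char abH by (simp add: sym_group_mult)
qed

lemma K_H: "K \<subseteq> H" unfolding K_def by blast

lemma K_eq: "K = Hp"
proof -
  have finK: "finite K" using K_H finite_H finite_subset by blast
  have KGH: "subgroup K GH" using group.subgroup_incl[OF S_grp K_sub H_sub K_H] .
  have "card (rcosets\<^bsub>GH\<^esub> K) * card K = order GH" using group.lagrange[OF GH_grp KGH] .
  hence dv: "card K dvd card H" by (metis dvd_triv_right order_def partial_object.select_convs(1) partial_object.surjective partial_object.update_convs(1))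
  have Kpos: "card K > 0" using finK Hp_K subgroup.one_closed[OF Hp_sub] card_gt_0_iff by blast
  have gK: "group (S\<lparr>carrier := K\<rparr>)" using group.subgroup_imp_group[OF S_grp K_sub] .
  have pf: "\<forall>q. prime q \<longrightarrow> q dvd card K \<longrightarrow> q = 2 \<or> q = p"
  proof (intro allI impI)
    fix q :: nat assume q: "prime q" "q dvd card K"
    have "\<forall>x\<in>carrier (S\<lparr>carrier := K\<rparr>). x [^]\<^bsub>S\<lparr>carrier := K\<rparr>\<^esub> p = \<one>\<^bsub>S\<lparr>carrier := K\<rparr>\<^esub>"
      unfolding K_def by (simp add: sym_group_one)
    moreover have "q dvd order (S\<lparr>carrier := K\<rparr>)" using q by (simp add: order_def)
    ultimately have "q dvd p" using group.exp_prime_dvd[OF gK] finK q(1) by simp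
    thus "q = 2 \<or> q = p" using q(1) p_prime primes_dvd_imp_eq by blast
  qed
  have ck: "card K = 2 ^ multiplicity 2 (card K) * p ^ multiplicity p (card K)"
    using prime_factors_2p[OF Kpos p_prime p_ne2 pf] .
  have "\<not> 2 dvd card K"
  proof
    assume "2 dvd card K"
    hence "(2::nat) dvd p" using gK finK pf group.exp_prime_dvd[OF gK, of p 2] unfolding K_def
      by (simp add: sym_group_one order_def)
    thus False using p_odd by simp
  qed
  hence "multiplicity 2 (card K) = 0" by (simp add: not_dvd_imp_multiplicity_0)
  hence ck2: "card K = p ^ multiplicity p (card K)" using ck by simp
  have "p ^ multiplicity p (card K) dvd 2 ^ ma * p ^ mp" using dv cardH ck2 by simp
  moreover have "coprime (p ^ multiplicity p (card K)) (2 ^ ma)"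
  proof -
    have "\<not> p dvd 2" using p_gt2 by (auto dest: dvd_imp_le)
    hence "coprime p 2" using prime_imp_coprime[OF p_prime] by blast
    thus ?thesis by simp
  qed
  ultimately have "p ^ multiplicity p (card K) dvd p ^ mp" by (simp add: coprime_dvd_mult_right_iff)
  hence "multiplicity p (card K) \<le> mp" using power_dvd_imp_le p_gt2 by simp
  hence "p ^ multiplicity p (card K) \<le> p ^ mp" using p_gt2 by (intro power_increasing) auto
  hence "card K \<le> card Hp" using ck2 cardHp by simp
  thus ?thesis using card_seteq[OF finK Hp_K] by simp
qed

end


context main_setup
begin

lemma id_one: "\<one>\<^bsub>S\<^esub> = id" by (simp add: sym_group_one)
lemma mult_comp: "x \<otimes>\<^bsub>S\<^esub> y = x \<circ> y" by (simp add: sym_group_mult)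

lemma Hp_normal: "normal Hp GH"
proof -
  have "\<forall>x\<in>carrier GH. \<forall>h\<in>Hp. x \<otimes>\<^bsub>GH\<^esub> h \<otimes>\<^bsub>GH\<^esub> inv\<^bsub>GH\<^esub> x \<in> Hp"
  proof (intro ballI)
    fix x h assume x: "x \<in> carrier GH" and h: "h \<in> Hp"
    have xH: "x \<in> H" using x by simp
    have hH: "h \<in> H" using h Hp_H by blast
    have xc: "x \<in> carrier S" and hc: "h \<in> carrier S" using xH hH H_carrier by blast+
    have inv: "inv\<^bsub>GH\<^esub> x = inv\<^bsub>S\<^esub> x" using group.m_inv_consistent[OF S_grp H_sub xH] .
    define y where "y = x \<otimes>\<^bsub>S\<^esub> h \<otimes>\<^bsub>S\<^esub> inv\<^bsub>S\<^esub> x"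
    have yH: "y \<in> H" unfolding y_def
      using subgroup.m_closed[OF H_sub] subgroup.m_inv_closed[OF H_sub] xH hH by simp
    have hp: "h [^]\<^bsub>S\<^esub> p = \<one>\<^bsub>S\<^esub>"
    proof -
      have "h \<in> K" using h K_eq by simp
      thus ?thesis unfolding K_def by (simp add: id_one)
    qed
    have "y [^]\<^bsub>S\<^esub> p = x \<otimes>\<^bsub>S\<^esub> (h [^]\<^bsub>S\<^esub> p) \<otimes>\<^bsub>S\<^esub> inv\<^bsub>S\<^esub> x"
      unfolding y_def using group.conj_pow[OF S_grp xc hc] .
    also have "\<dots> = \<one>\<^bsub>S\<^esub>" using hp xc group.r_inv[OF S_grp xc] monoid.r_one[OF group.is_monoid[OF S_grp] xc] by (simp del: sym_group_inv_equality)
    finally have "y \<in> K" unfolding K_def using yH by (simp add: id_one)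
    hence "y \<in> Hp" using K_eq by simp
    thus "x \<otimes>\<^bsub>GH\<^esub> h \<otimes>\<^bsub>GH\<^esub> inv\<^bsub>GH\<^esub> x \<in> Hp" using inv unfolding y_def by simp
  qed
  thus ?thesis using group.normal_inv_iff[OF GH_grp] Hp_subGH by blast
qed

lemma coprime_p2: "coprime (p ^ a) (2 ^ b)"
proof -
  have "\<not> p dvd 2" using p_gt2 by (auto dest: dvd_imp_le)
  hence "coprime p 2" using prime_imp_coprime[OF p_prime] by blast
  thus ?thesis by simp
qed

lemma Hp_H2_int: "Hp \<inter> H2 = {id}"
proof
  show "{id} \<subseteq> Hp \<inter> H2" using subgroup.one_closed[OF Hp_sub] subgroup.one_closed[OF H2_sub] by (simp add: id_one)
  show "Hp \<inter> H2 \<subseteq> {id}"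
  proof
    fix x assume x: "x \<in> Hp \<inter> H2"
    have "x [^]\<^bsub>S\<^esub> (p ^ mp) = \<one>\<^bsub>S\<^esub>" using sub_pow_card[OF Hp_sub] cardHp x by (simp add: id_one)
    moreover have "x [^]\<^bsub>S\<^esub> ((2::nat) ^ ma) = \<one>\<^bsub>S\<^esub>" using sub_pow_card[OF H2_sub] cardH2 x by (simp add: id_one)
    moreover have "x \<in> carrier S" using x Hp_H H_carrier by blast
    ultimately have "x = \<one>\<^bsub>S\<^esub>" using group.coprime_pows_one[OF S_grp] coprime_p2 by blast
    thus "x \<in> {id}" by (simp add: id_one)
  qed
qed

lemma prod_eq: "Hp <#>\<^bsub>S\<^esub> H2 = H"
proof -
  have sub: "Hp <#>\<^bsub>S\<^esub> H2 \<subseteq> H"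
  proof
    fix z assume "z \<in> Hp <#>\<^bsub>S\<^esub> H2"
    then obtain x y where xy: "x \<in> Hp" "y \<in> H2" "z = x \<otimes>\<^bsub>S\<^esub> y" unfolding set_mult_def by blast
    thus "z \<in> H" using subgroup.m_closed[OF H_sub] Hp_H H2_H by blast
  qed
  have "card (Hp <#>\<^bsub>S\<^esub> H2) = card Hp * card H2"
    using group.card_set_mult_trivial[OF S_grp Hp_sub H2_sub] Hp_H2_int finite_Hp finite_H2 by (simp add: id_one)
  also have "\<dots> = card H" using cardHp cardH2 cardH by (simp add: mult.commute)
  finally show ?thesis using sub finite_H card_subset_eq by blast
qed

lemma Hp_dp: "Hp = H \<inter> direct_prod_perms n k \<Omega> Gi"
proof -
  have "H \<inter> direct_prod_perms n k \<Omega> Gi = K"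
    unfolding direct_prod_perms_def using K_char K_H H_carrier by blast
  thus ?thesis using K_eq by simp
qed

lemma conj_img: "g \<in> carrier S \<Longrightarrow> g <#\<^bsub>S\<^esub> X #>\<^bsub>S\<^esub> inv\<^bsub>S\<^esub> g = (\<lambda>h. g \<otimes>\<^bsub>S\<^esub> h \<otimes>\<^bsub>S\<^esub> inv\<^bsub>S\<^esub> g) ` X"
  unfolding l_coset_def r_coset_def by auto

lemma norm_iff: "X \<subseteq> carrier S \<Longrightarrow> g \<in> normalizer S X \<longleftrightarrow> g \<in> carrier S \<and> g <#\<^bsub>S\<^esub> X #>\<^bsub>S\<^esub> inv\<^bsub>S\<^esub> g = X"
  unfolding normalizer_def stabilizer_def by simp

lemma normalizer_sub: "normalizer S H \<subseteq> normalizer S Hp"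
proof
  fix g assume g: "g \<in> normalizer S H"
  have gc: "g \<in> carrier S" and gH: "(\<lambda>h. g \<otimes>\<^bsub>S\<^esub> h \<otimes>\<^bsub>S\<^esub> inv\<^bsub>S\<^esub> g) ` H = H"
    using g norm_iff[OF H_carrier] conj_img by auto
  have HpS: "Hp \<subseteq> carrier S" using Hp_H H_carrier by blast
  have sub: "(\<lambda>h. g \<otimes>\<^bsub>S\<^esub> h \<otimes>\<^bsub>S\<^esub> inv\<^bsub>S\<^esub> g) ` Hp \<subseteq> Hp"
  proof
    fix y assume "y \<in> (\<lambda>h. g \<otimes>\<^bsub>S\<^esub> h \<otimes>\<^bsub>S\<^esub> inv\<^bsub>S\<^esub> g) ` Hp"
    then obtain h where h: "h \<in> Hp" "y = g \<otimes>\<^bsub>S\<^esub> h \<otimes>\<^bsub>S\<^esub> inv\<^bsub>S\<^esub> g" by blast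
    have hc: "h \<in> carrier S" using h HpS by blast
    have yH: "y \<in> H" using gH h Hp_H by blast
    have hp: "h [^]\<^bsub>S\<^esub> p = \<one>\<^bsub>S\<^esub>"
    proof -
      have "h \<in> K" using h K_eq by simp
      thus ?thesis unfolding K_def by (simp add: id_one)
    qed
    have "y [^]\<^bsub>S\<^esub> p = g \<otimes>\<^bsub>S\<^esub> (h [^]\<^bsub>S\<^esub> p) \<otimes>\<^bsub>S\<^esub> inv\<^bsub>S\<^esub> g"
      unfolding h(2) using group.conj_pow[OF S_grp gc hc] .
    also have "\<dots> = \<one>\<^bsub>S\<^esub>" using hp gc group.r_inv[OF S_grp gc] monoid.r_one[OF group.is_monoid[OF S_grp] gc] by (simp del: sym_group_inv_equality)
    finally have "y \<in> K" unfolding K_def using yH by (simp add: id_one)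
    thus "y \<in> Hp" using K_eq by simp
  qed
  have inj: "inj_on (\<lambda>h. g \<otimes>\<^bsub>S\<^esub> h \<otimes>\<^bsub>S\<^esub> inv\<^bsub>S\<^esub> g) Hp"
  proof (rule inj_onI)
    fix a b assume ab: "a \<in> Hp" "b \<in> Hp" "g \<otimes>\<^bsub>S\<^esub> a \<otimes>\<^bsub>S\<^esub> inv\<^bsub>S\<^esub> g = g \<otimes>\<^bsub>S\<^esub> b \<otimes>\<^bsub>S\<^esub> inv\<^bsub>S\<^esub> g"
    have c: "a \<in> carrier S" "b \<in> carrier S" using ab HpS by blast+
    have "g \<otimes>\<^bsub>S\<^esub> a = g \<otimes>\<^bsub>S\<^esub> b"
      using ab(3) c gc group.right_cancel[OF S_grp] group.inv_closed[OF S_grp] monoid.m_closed[OF group.is_monoid[OF S_grp]] by metis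
    thus "a = b" using monoid.Units_l_cancel[OF group.is_monoid[OF S_grp], of g a b] group.Units_eq[OF S_grp] c gc by simp
  qed
  have "card ((\<lambda>h. g \<otimes>\<^bsub>S\<^esub> h \<otimes>\<^bsub>S\<^esub> inv\<^bsub>S\<^esub> g) ` Hp) = card Hp" using card_image[OF inj] .
  hence "(\<lambda>h. g \<otimes>\<^bsub>S\<^esub> h \<otimes>\<^bsub>S\<^esub> inv\<^bsub>S\<^esub> g) ` Hp = Hp" using sub finite_Hp card_subset_eq by blast
  thus "g \<in> normalizer S Hp" using norm_iff[OF HpS] conj_img[OF gc] gc by simp
qed

end


context main_setup
begin

lemma mem_set_mult: "z \<in> A <#>\<^bsub>G\<^esub> B \<longleftrightarrow> (\<exists>a\<in>A. \<exists>b\<in>B. z = a \<otimes>\<^bsub>G\<^esub> b)"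
  unfolding set_mult_def by simp

lemma R_img_mult:
  assumes i: "i \<in> {1..k}" and X: "X \<subseteq> H" and Y: "Y \<subseteq> H"
  shows "R i ` (X <#>\<^bsub>S\<^esub> Y) = R i ` X <#>\<^bsub>S\<^esub> R i ` Y"
proof (rule Set.set_eqI, rule iffI)
  fix z assume "z \<in> R i ` (X <#>\<^bsub>S\<^esub> Y)"
  then obtain w where w: "w \<in> X <#>\<^bsub>S\<^esub> Y" "z = R i w" by (rule imageE)
  then obtain x y where xy: "x \<in> X" "y \<in> Y" "w = x \<otimes>\<^bsub>S\<^esub> y" unfolding mem_set_mult by blast
  have yH: "y \<in> H" using xy Y by blast
  have "z = R i x \<otimes>\<^bsub>S\<^esub> R i y" using R_comp[OF i yH, of x] xy w by (simp add: mult_comp)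
  moreover have "R i x \<in> R i ` X" "R i y \<in> R i ` Y" using xy by simp_all
  ultimately show "z \<in> R i ` X <#>\<^bsub>S\<^esub> R i ` Y" unfolding mem_set_mult by blast
next
  fix z assume "z \<in> R i ` X <#>\<^bsub>S\<^esub> R i ` Y"
  then obtain u v where uv: "u \<in> R i ` X" "v \<in> R i ` Y" "z = u \<otimes>\<^bsub>S\<^esub> v" unfolding mem_set_mult by blast
  obtain x where x: "x \<in> X" "u = R i x" using uv(1) by (rule imageE) simp
  obtain y where y: "y \<in> Y" "v = R i y" using uv(2) by (rule imageE) simp
  have yH: "y \<in> H" using y Y by blast
  have "z = R i (x \<otimes>\<^bsub>S\<^esub> y)" using R_comp[OF i yH, of x] uv x y by (simp add: mult_comp)
  moreover have "x \<otimes>\<^bsub>S\<^esub> y \<in> X <#>\<^bsub>S\<^esub> Y" unfolding mem_set_mult using x y by blast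
  ultimately show "z \<in> R i ` (X <#>\<^bsub>S\<^esub> Y)" by (rule image_eqI)
qed

lemma restr_facts:
  assumes i: "i \<in> {1..k}"
  shows "R i ` Hp = Gi i" "card (R i ` H2) = 2" "R i ` H2 \<inter> Gi i = {id}" "R i ` H2 \<subseteq> D i"
proof -
  define A where "A = R i ` Hp"
  define B where "B = R i ` H2"
  have DAB: "D i = A <#>\<^bsub>S\<^esub> B"
    unfolding A_def B_def restr_group_def using R_img_mult[OF i Hp_H H2_H] prod_eq by simp
  have finA: "finite A" unfolding A_def using finite_Hp by simp
  have finB: "finite B" unfolding B_def using finite_H2 by simp
  have finG: "finite (Gi i)" using dfacts(2)[OF i] p_gt2 card.infinite by fastforce
  have c1: "2 * p \<le> card A * card B" using card_set_mult_le[OF finA finB, of S] DAB dfacts(1)[OF i] by simp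
  have AG: "A \<subseteq> Gi i"
  proof
    fix y assume "y \<in> A"
    then obtain x where x: "x \<in> Hp" "y = R i x" unfolding A_def by blast
    have "x \<in> K" using x K_eq by simp
    moreover have "x \<in> H" using x Hp_H by blast
    ultimately have "\<forall>j\<in>{1..k}. R j x \<in> Gi j" using K_char by simp
    thus "y \<in> Gi i" using x i by simp
  qed
  have cA: "card A \<le> p" using card_mono[OF finG AG] dfacts(2)[OF i] by simp
  have Bsub: "subgroup B S" unfolding B_def using group_hom.subgroup_img_is_subgroup[OF R_hom[OF i] H2_subGH] .
  have BD: "B \<subseteq> D i" unfolding B_def restr_group_def using H2_H by blast
  have int: "Gi i \<inter> B = {id}"
  proof
    show "{id} \<subseteq> Gi i \<inter> B" using subgroup.one_closed[OF dfacts(3)[OF i]] subgroup.one_closed[OF Bsub] by (simp add: id_one)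
    show "Gi i \<inter> B \<subseteq> {id}"
    proof
      fix y assume y: "y \<in> Gi i \<inter> B"
      then obtain x where x: "x \<in> H2" "y = R i x" unfolding B_def by blast
      have xH: "x \<in> H" using x H2_H by blast
      have "x [^]\<^bsub>S\<^esub> ((2::nat) ^ ma) = id" using sub_pow_card[OF H2_sub x(1)] cardH2 by simp
      hence e1: "y [^]\<^bsub>S\<^esub> ((2::nat) ^ ma) = \<one>\<^bsub>S\<^esub>" using R_pow[OF i xH, of "2 ^ ma"] x restr_id by (simp add: id_one)
      have e2: "y [^]\<^bsub>S\<^esub> (p ^ 1) = \<one>\<^bsub>S\<^esub>" using dfacts(10)[OF i] y by (simp add: id_one)
      have yc: "y \<in> carrier S" using y subgroup.subset[OF Bsub] by blast
      have "y = \<one>\<^bsub>S\<^esub>" by (rule group.coprime_pows_one[OF S_grp yc e2 e1 coprime_p2])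
      thus "y \<in> {id}" by (simp add: id_one)
    qed
  qed
  have "card (Gi i <#>\<^bsub>S\<^esub> B) = card (Gi i) * card B"
    using group.card_set_mult_trivial[OF S_grp dfacts(3)[OF i] Bsub] int finG finB by (simp add: id_one)
  moreover have "Gi i <#>\<^bsub>S\<^esub> B \<subseteq> D i"
  proof
    fix z assume "z \<in> Gi i <#>\<^bsub>S\<^esub> B"
    then obtain x y where xy: "x \<in> Gi i" "y \<in> B" "z = x \<otimes>\<^bsub>S\<^esub> y" unfolding mem_set_mult by blast
    have "x \<in> D i" "y \<in> D i" using xy dfacts(4)[OF i] BD by auto
    thus "z \<in> D i" using subgroup.m_closed[OF D_sub[OF i]] xy(3) by simp
  qed
  moreover have "finite (D i)" using dfacts(1)[OF i] p_gt2 card.infinite by fastforce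
  ultimately have "p * card B \<le> 2 * p" using card_mono dfacts(1,2)[OF i] by metis
  hence cB: "card B \<le> 2" using p_gt2 by simp
  have "2 * p \<le> card A * 2" using c1 cB by (meson le_trans mult_le_mono2)
  hence "p \<le> card A" by simp
  hence cA': "card A = p" using cA by simp
  have "2 * p \<le> p * card B" using c1 cA by (metis le_trans mult_le_mono1)
  hence "2 \<le> card B" using p_gt2 by simp
  hence cB': "card B = 2" using cB by simp
  have "A = Gi i" using card_seteq[OF finG AG] cA' dfacts(2)[OF i] by simp
  thus "R i ` Hp = Gi i" unfolding A_def .
  show "card (R i ` H2) = 2" using cB' unfolding B_def .
  show "R i ` H2 \<inter> Gi i = {id}" using int unfolding B_def by blast
  show "R i ` H2 \<subseteq> D i" using BD unfolding B_def .
qed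

lemma orbits_Hp: "orbits (S\<lparr>carrier := Hp\<rparr>) {1..n} (\<lambda>g. g) = \<Omega> ` {1..k}"
proof -
  have eq: "orbit (S\<lparr>carrier := Hp\<rparr>) (\<lambda>g. g) x = orbit GH (\<lambda>g. g) x" if x: "x \<in> {1..n}" for x
  proof -
    obtain i where i: "i \<in> {1..k}" "x \<in> \<Omega> i" "orbit GH (\<lambda>g. g) x = \<Omega> i" using cover[OF x] by blast
    have "{g x | g. g \<in> Hp} = \<Omega> i"
    proof
      show "{g x | g. g \<in> Hp} \<subseteq> \<Omega> i" using i(3) Hp_H unfolding orbit_GH by blast
      show "\<Omega> i \<subseteq> {g x | g. g \<in> Hp}"
      proof
        fix y assume y: "y \<in> \<Omega> i"
        obtain \<tau> where t: "\<tau> \<in> Gi i" "\<tau> x = y" using dfacts(7)[OF i(1) i(2) y] by blast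
        then obtain \<sigma> where s: "\<sigma> \<in> Hp" "\<tau> = R i \<sigma>" using restr_facts(1)[OF i(1)] by blast
        have "\<sigma> x = y" using s t R_in[OF i(2)] by simp
        thus "y \<in> {g x | g. g \<in> Hp}" using s by blast
      qed
    qed
    thus ?thesis using i(3) unfolding orbit_def by simp
  qed
  have "orbits (S\<lparr>carrier := Hp\<rparr>) {1..n} (\<lambda>g. g) = orbits GH {1..n} (\<lambda>g. g)"
    unfolding orbits_def by (rule Collect_cong) (use eq in auto)
  thus ?thesis using orbs by simp
qed

lemma part3:
  assumes i: "i \<in> {1..k}"
  shows "\<exists>\<alpha> \<in> \<Omega> i. restr_group (\<Omega> i) H2 = stabilizer (S\<lparr>carrier := D i\<rparr>) (\<lambda>g. g) \<alpha>"
proof -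
  define B where "B = R i ` H2"
  have cB: "card B = 2" and int: "B \<inter> Gi i = {id}" and BD: "B \<subseteq> D i"
    using restr_facts[OF i] unfolding B_def by auto
  have idB: "id \<in> B" using int by blast
  have finB: "finite B" using cB card.infinite by fastforce
  have "\<not> B \<subseteq> {id}"
  proof
    assume "B \<subseteq> {id}"
    hence "card B \<le> card {id}" using card_mono[of "{id}" B] by simp
    thus False using cB by simp
  qed
  then obtain r where r: "r \<in> B" "r \<noteq> id" by blast
  have rD: "r \<in> D i" using r BD by blast
  have rG: "r \<notin> Gi i" using r int by blast
  have Beq: "B = {id, r}"
  proof -
    have "{id, r} \<subseteq> B" using idB r by blast
    moreover have "card {id, r} = 2" using r by simp
    ultimately show ?thesis using card_seteq[OF finB] cB by (metis order_refl)
  qed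
  obtain \<alpha> where a: "\<alpha> \<in> \<Omega> i" "r \<alpha> = \<alpha>" using dfacts(8)[OF i rD rG] by blast
  have "stabilizer (S\<lparr>carrier := D i\<rparr>) (\<lambda>g. g) \<alpha> = {g \<in> D i. g \<alpha> = \<alpha>}"
    unfolding stabilizer_def by simp
  also have "\<dots> = {id, r}"
  proof
    show "{id, r} \<subseteq> {g \<in> D i. g \<alpha> = \<alpha>}" using idB BD rD a by auto
    show "{g \<in> D i. g \<alpha> = \<alpha>} \<subseteq> {id, r}"
    proof
      fix g assume g: "g \<in> {g \<in> D i. g \<alpha> = \<alpha>}"
      show "g \<in> {id, r}"
      proof (cases "g \<in> Gi i")
        case True
        then show ?thesis using dfacts(6)[OF i True a(1)] g by simp
      next
        case False
        then show ?thesis using dfacts(9)[OF i _ False rD rG a(1)] g a(2) by simp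
      qed
    qed
  qed
  finally show ?thesis using Beq a(1) unfolding B_def restr_group_def by metis
qed

lemma all_results:
  shows
    "(normal Hp ((sym_group n)\<lparr>carrier := H\<rparr>)
        \<and> Hp \<inter> H2 = {id}
        \<and> Hp <#>\<^bsub>sym_group n\<^esub> H2 = H
        \<and> Hp = H \<inter> direct_prod_perms n k \<Omega> Gi
        \<and> normalizer (sym_group n) H \<subseteq> normalizer (sym_group n) Hp)
     \<and> (Hp \<subseteq> direct_prod_perms n k \<Omega> Gi
        \<and> (\<forall>i \<in> {1..k}. restr_group (\<Omega> i) Hp = Gi i)
        \<and> orbits ((sym_group n)\<lparr>carrier := Hp\<rparr>) {1..n} (\<lambda>g. g) = \<Omega> ` {1..k}
        \<and> (\<forall>i \<in> {1..k}. card (restr_group (\<Omega> i) Hp) = p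
              \<and> cyclic_group ((sym_group n)\<lparr>carrier := restr_group (\<Omega> i) Hp\<rparr>)))
     \<and> (\<forall>i \<in> {1..k}. \<exists>\<alpha> \<in> \<Omega> i.
          restr_group (\<Omega> i) H2
            = stabilizer ((sym_group n)\<lparr>carrier := restr_group (\<Omega> i) H\<rparr>) (\<lambda>g. g) \<alpha>)"
proof -
  have rg: "\<forall>i \<in> {1..k}. restr_group (\<Omega> i) Hp = Gi i"
    using restr_facts(1) unfolding restr_group_def by simp
  have cyc: "\<forall>i \<in> {1..k}. card (restr_group (\<Omega> i) Hp) = p
              \<and> cyclic_group ((sym_group n)\<lparr>carrier := restr_group (\<Omega> i) Hp\<rparr>)"
  proof
    fix i assume i: "i \<in> {1..k}"
    have g: "group (S\<lparr>carrier := Gi i\<rparr>)" using group.subgroup_imp_group[OF S_grp dfacts(3)[OF i]] .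
    have "prime (order (S\<lparr>carrier := Gi i\<rparr>))" using dfacts(2)[OF i] p_prime by (simp add: order_def)
    hence "cyclic_group (S\<lparr>carrier := Gi i\<rparr>)" using group.prime_order_cyclic[OF g] by blast
    thus "card (restr_group (\<Omega> i) Hp) = p
              \<and> cyclic_group ((sym_group n)\<lparr>carrier := restr_group (\<Omega> i) Hp\<rparr>)"
      using rg i dfacts(2)[OF i] by simp
  qed
  have sub: "Hp \<subseteq> direct_prod_perms n k \<Omega> Gi" using Hp_dp by blast
  have p3: "\<forall>i \<in> {1..k}. \<exists>\<alpha> \<in> \<Omega> i.
          restr_group (\<Omega> i) H2 = stabilizer ((sym_group n)\<lparr>carrier := restr_group (\<Omega> i) H\<rparr>) (\<lambda>g. g) \<alpha>"
    by (intro ballI) (rule part3)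
  show ?thesis using Hp_normal Hp_H2_int prod_eq Hp_dp normalizer_sub sub rg orbits_Hp cyc p3
    by (intro conjI) assumption+
qed

end

theorem lemma7p1:
  fixes p k n :: nat
    and H Hp H2 :: "(nat \<Rightarrow> nat) set"
    and \<Omega> :: "nat \<Rightarrow> nat set"
    and Gi :: "nat \<Rightarrow> (nat \<Rightarrow> nat) set"
  assumes p_prime: "prime p" and p_odd: "odd p"
    and n_def: "n = p * k"
    and H_sub: "subgroup H (sym_group n)"
    and orbs: "orbits ((sym_group n)\<lparr>carrier := H\<rparr>) {1..n} (\<lambda>g. g) = \<Omega> ` {1..k}"
    and \<Omega>_inj: "inj_on \<Omega> {1..k}"
    and \<Omega>_card: "\<forall>i \<in> {1..k}. card (\<Omega> i) = p"
    and dihedral: "\<forall>i \<in> {1..k}.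
        perm_isomorphic (restr_group (\<Omega> i) H) (\<Omega> i) (dihedral_perms p) {0..<p}"
    and Gi_sylow: "\<forall>i \<in> {1..k}.
        is_sylow ((sym_group n)\<lparr>carrier := restr_group (\<Omega> i) H\<rparr>) p (Gi i)"
    and Hp_sylow: "is_sylow ((sym_group n)\<lparr>carrier := H\<rparr>) p Hp"
    and H2_sylow: "is_sylow ((sym_group n)\<lparr>carrier := H\<rparr>) 2 H2"
  shows
    \<comment> \<open>(1) H = Hp \<rtimes> H2 = (H \<inter> G) \<rtimes> H2, and N(H) \<le> N(Hp)\<close>
    "(normal Hp ((sym_group n)\<lparr>carrier := H\<rparr>)
        \<and> Hp \<inter> H2 = {id}
        \<and> Hp <#>\<^bsub>sym_group n\<^esub> H2 = H
        \<and> Hp = H \<inter> direct_prod_perms n k \<Omega> Gi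
        \<and> normalizer (sym_group n) H \<subseteq> normalizer (sym_group n) Hp)
     \<comment> \<open>(2) Hp is a subdirect product of G; orbits of Hp are the Omega i, each
         restriction cyclic of order p\<close>
     \<and> (Hp \<subseteq> direct_prod_perms n k \<Omega> Gi
        \<and> (\<forall>i \<in> {1..k}. restr_group (\<Omega> i) Hp = Gi i)
        \<and> orbits ((sym_group n)\<lparr>carrier := Hp\<rparr>) {1..n} (\<lambda>g. g) = \<Omega> ` {1..k}
        \<and> (\<forall>i \<in> {1..k}. card (restr_group (\<Omega> i) Hp) = p
              \<and> cyclic_group ((sym_group n)\<lparr>carrier := restr_group (\<Omega> i) Hp\<rparr>)))
     \<comment> \<open>(3) H2 restricted to Omega i is a point stabiliser in D i\<close>
     \<and> (\<forall>i \<in> {1..k}. \<exists>\<alpha> \<in> \<Omega> i.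
          restr_group (\<Omega> i) H2
            = stabilizer ((sym_group n)\<lparr>carrier := restr_group (\<Omega> i) H\<rparr>) (\<lambda>g. g) \<alpha>)"
  proof -
  have "main_setup p k n H Hp H2 \<Omega> Gi"
    using p_prime p_odd n_def H_sub orbs \<Omega>_inj \<Omega>_card dihedral Gi_sylow Hp_sylow H2_sylow
    unfolding main_setup_def by (intro conjI) assumption+
  then show ?thesis by (rule main_setup.all_results)
qed

end
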